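(* Let $G=(V,E)$ be an $n$-vertex graph and $\pi\colon[n]\to V$ a fixed bijection. If the longest dependency path with respect to $\pi$ has length $2l+1$ (with $l\ge 0$), then the parallel greedy MIS algorithm run on $G$ with the order $\pi$ terminates within at most $l+1$ rounds.
   Context: Parallel greedy MIS with a fixed order $\pi\colon[n]\to V$ (a bijection; $\pi(i)$ is the vertex at position $i$): in each round, every remaining vertex whose position is smaller than the positions of all its remaining neighbors is added to the independent set, and these vertices together with all their neighbors are removed; rounds are counted until no vertex remains. Let $V^*\subseteq V$ be the MIS produced by the sequential greedy algorithm that processes $\pi(1),\dots,\pi(n)$ in this order and adds a vertex iff none of its neighbors was added before. For $v\notin V^*$, its inhibitor $\mathrm{inhib}(v)$ is the neighbor of $v$ in $V^*$ with minimum position. A sequence of positions $1\le p_1<\dots<p_{2l+1}\le n$ ($l\ge 0$) forms a dependency path of length $2l+1$ (with respect to $\pi$) if (i) $(\pi(p_1),\dots,\pi(p_{2l+1}))$ is a path in $G$; (ii) $\pi(p_k)\in V^*$ for all odd $k$; (iii) $\pi(p_k)\notin V^*$ for all even $k$; (iv) $\pi(p_{k-1})=\mathrm{inhib}(\pi(p_k))$ for all even $k$. The dependency length is the maximum length of a dependency path. *)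

theory Defs
  imports Main
begin

definition simple_graph :: "'a set \<Rightarrow> ('a \<Rightarrow> 'a \<Rightarrow> bool) \<Rightarrow> bool" where
  "simple_graph V E \<longleftrightarrow> finite V \<and> (\<forall>u v. E u v \<longrightarrow> u \<in> V \<and> v \<in> V)
     \<and> (\<forall>u v. E u v \<longrightarrow> E v u) \<and> (\<forall>v. \<not> E v v)"

fun seq_greedy :: "(nat \<Rightarrow> 'a) \<Rightarrow> ('a \<Rightarrow> 'a \<Rightarrow> bool) \<Rightarrow> nat \<Rightarrow> 'a set" where
  "seq_greedy \<pi> E 0 = {}"
| "seq_greedy \<pi> E (Suc k) =
     (if (\<exists>u\<in>seq_greedy \<pi> E k. E u (\<pi> (Suc k))) then seq_greedy \<pi> E k
      else insert (\<pi> (Suc k)) (seq_greedy \<pi> E k))"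

definition greedy_mis :: "nat \<Rightarrow> (nat \<Rightarrow> 'a) \<Rightarrow> ('a \<Rightarrow> 'a \<Rightarrow> bool) \<Rightarrow> 'a set" where
  "greedy_mis n \<pi> E = seq_greedy \<pi> E n"

definition inhib :: "nat \<Rightarrow> (nat \<Rightarrow> 'a) \<Rightarrow> ('a \<Rightarrow> 'a \<Rightarrow> bool) \<Rightarrow> 'a \<Rightarrow> 'a" where
  "inhib n \<pi> E v = \<pi> (LEAST i. i \<in> {1..n} \<and> \<pi> i \<in> greedy_mis n \<pi> E \<and> E (\<pi> i) v)"

text \<open>A dependency path, given as the list of positions [p_1, ..., p_{2l+1}]
  (list index j corresponds to p_{j+1}).\<close>
definition dep_path :: "nat \<Rightarrow> (nat \<Rightarrow> 'a) \<Rightarrow> ('a \<Rightarrow> 'a \<Rightarrow> bool) \<Rightarrow> nat list \<Rightarrow> bool" where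
  "dep_path n \<pi> E ps \<longleftrightarrow>
     odd (length ps) \<and> set ps \<subseteq> {1..n} \<and> sorted_wrt (<) ps
   \<and> (\<forall>j. Suc j < length ps \<longrightarrow> E (\<pi> (ps ! j)) (\<pi> (ps ! Suc j)))
   \<and> (\<forall>j < length ps. even j \<longrightarrow> \<pi> (ps ! j) \<in> greedy_mis n \<pi> E)
   \<and> (\<forall>j < length ps. odd j \<longrightarrow> \<pi> (ps ! j) \<notin> greedy_mis n \<pi> E
        \<and> \<pi> (ps ! (j - 1)) = inhib n \<pi> E (\<pi> (ps ! j)))"

definition par_selected :: "nat \<Rightarrow> (nat \<Rightarrow> 'a) \<Rightarrow> ('a \<Rightarrow> 'a \<Rightarrow> bool) \<Rightarrow> 'a set \<Rightarrow> 'a set" where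
  "par_selected n \<pi> E R = {\<pi> i | i. i \<in> {1..n} \<and> \<pi> i \<in> R \<and>
      (\<forall>j\<in>{1..n}. \<pi> j \<in> R \<and> E (\<pi> i) (\<pi> j) \<longrightarrow> i < j)}"

definition par_round :: "nat \<Rightarrow> (nat \<Rightarrow> 'a) \<Rightarrow> ('a \<Rightarrow> 'a \<Rightarrow> bool) \<Rightarrow> 'a set \<Rightarrow> 'a set" where
  "par_round n \<pi> E R = R - (par_selected n \<pi> E R \<union>
      {u \<in> R. \<exists>v \<in> par_selected n \<pi> E R. E v u})"

definition remaining :: "nat \<Rightarrow> (nat \<Rightarrow> 'a) \<Rightarrow> ('a \<Rightarrow> 'a \<Rightarrow> bool) \<Rightarrow> 'a set \<Rightarrow> nat \<Rightarrow> 'a set" where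
  "remaining n \<pi> E V k = (par_round n \<pi> E ^^ k) V"

end

theory Submission
  imports Defs
begin

context
  fixes n :: nat and \<pi> :: "nat \<Rightarrow> 'a" and E :: "'a \<Rightarrow> 'a \<Rightarrow> bool"
  assumes inj: "inj_on \<pi> {1..n}"
    and esym: "\<And>u v. E u v \<Longrightarrow> E v u"
    and irr: "\<And>v. \<not> E v v"
begin

lemma sg_sub: "seq_greedy \<pi> E k \<subseteq> \<pi> ` {1..k}"
  by (induction k) auto

lemma sg_restrict: "k \<le> m \<Longrightarrow> m \<le> n \<Longrightarrow> seq_greedy \<pi> E m \<inter> \<pi> ` {1..k} = seq_greedy \<pi> E k"
proof (induction m)
  case 0
  then show ?case by simp
next
  case (Suc m)
  show ?case
  proof (cases "k = Suc m")
    case True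
    then show ?thesis using sg_sub[of "Suc m"] by blast
  next
    case False
    then have km: "k \<le> m" using Suc by simp
    have IH: "seq_greedy \<pi> E m \<inter> \<pi> ` {1..k} = seq_greedy \<pi> E k" using Suc km by simp
    have nin: "\<pi> (Suc m) \<notin> \<pi> ` {1..k}"
    proof
      assume "\<pi> (Suc m) \<in> \<pi> ` {1..k}"
      then obtain i where i: "i \<in> {1..k}" "\<pi> (Suc m) = \<pi> i" by auto
      have "Suc m \<in> {1..n}" using Suc.prems by simp
      moreover have "i \<in> {1..n}" using i Suc.prems km by simp
      ultimately have "Suc m = i" using inj_onD[OF inj i(2)] by simp
      then show False using i km by simp
    qed
    have "seq_greedy \<pi> E (Suc m) = seq_greedy \<pi> E m \<or> seq_greedy \<pi> E (Suc m) = insert (\<pi> (Suc m)) (seq_greedy \<pi> E m)"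
      by simp
    then show ?thesis using IH nin by auto
  qed
qed

abbreviation M where "M \<equiv> greedy_mis n \<pi> E"

lemma M_sub: "M \<subseteq> \<pi> ` {1..n}"
  unfolding greedy_mis_def using sg_sub by blast

lemma sg_mem:
  assumes p: "p \<in> {1..n}"
  shows "\<pi> p \<in> M \<longleftrightarrow> \<not>(\<exists>i. 1 \<le> i \<and> i < p \<and> \<pi> i \<in> M \<and> E (\<pi> i) (\<pi> p))"
proof -
  obtain q where q: "p = Suc q" using p by (cases p) auto
  have A: "M \<inter> \<pi> ` {1..p} = seq_greedy \<pi> E p"
    unfolding greedy_mis_def using sg_restrict[of p n] p by auto
  have B: "M \<inter> \<pi> ` {1..q} = seq_greedy \<pi> E q"
    unfolding greedy_mis_def using sg_restrict[of q n] p q by auto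
  have C: "\<pi> p \<notin> seq_greedy \<pi> E q"
  proof
    assume "\<pi> p \<in> seq_greedy \<pi> E q"
    then obtain i where i: "i \<in> {1..q}" "\<pi> p = \<pi> i" using sg_sub by blast
    have "i \<in> {1..n}" using i p q by simp
    then have "p = i" using inj_onD[OF inj i(2)] p by simp
    then show False using i q by simp
  qed
  have pp: "\<pi> p \<in> \<pi> ` {1..p}" using p by auto
  have D: "\<pi> p \<in> M \<longleftrightarrow> \<pi> p \<in> seq_greedy \<pi> E p" using A pp by blast
  have F: "(\<exists>u\<in>seq_greedy \<pi> E q. E u (\<pi> p)) \<longleftrightarrow> (\<exists>i. 1 \<le> i \<and> i < p \<and> \<pi> i \<in> M \<and> E (\<pi> i) (\<pi> p))"
  proof -
    have "(\<exists>u\<in>seq_greedy \<pi> E q. E u (\<pi> p)) \<longleftrightarrow> (\<exists>u\<in>M \<inter> \<pi> ` {1..q}. E u (\<pi> p))"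
      using B by simp
    also have "\<dots> \<longleftrightarrow> (\<exists>i\<in>{1..q}. \<pi> i \<in> M \<and> E (\<pi> i) (\<pi> p))" by blast
    also have "\<dots> \<longleftrightarrow> (\<exists>i. 1 \<le> i \<and> i < p \<and> \<pi> i \<in> M \<and> E (\<pi> i) (\<pi> p))"
      using q by (auto simp: less_Suc_eq_le)
    finally show ?thesis .
  qed
  show ?thesis using D F C q by auto
qed

lemma M_indep: "u \<in> M \<Longrightarrow> w \<in> M \<Longrightarrow> E u w \<Longrightarrow> False"
proof -
  assume u: "u \<in> M" and w: "w \<in> M" and e: "E u w"
  obtain p q where p: "p \<in> {1..n}" "u = \<pi> p" and q: "q \<in> {1..n}" "w = \<pi> q"
    using M_sub u w by blast
  have "p \<noteq> q" using e irr p q by auto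
  then consider "p < q" | "q < p" by linarith
  then show False
  proof cases
    case 1 then show ?thesis using sg_mem[OF q(1)] p q u w e by auto
  next
    case 2 then show ?thesis using sg_mem[OF p(1)] p q u w esym[OF e] by auto
  qed
qed

lemma M_max: "j \<in> {1..n} \<Longrightarrow> \<pi> j \<notin> M \<Longrightarrow> \<exists>i. 1 \<le> i \<and> i < j \<and> \<pi> i \<in> M \<and> E (\<pi> i) (\<pi> j)"
  using sg_mem by blast

definition Inv where "Inv R \<longleftrightarrow> (\<forall>v\<in>M. v \<notin> R \<longrightarrow> (\<forall>w. E v w \<longrightarrow> w \<notin> R))"

lemma Inv_round: assumes "Inv R" shows "Inv (par_round n \<pi> E R)"
  unfolding Inv_def
proof (intro ballI impI allI)
  fix v w assume v: "v \<in> M" and vn: "v \<notin> par_round n \<pi> E R" and e: "E v w"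
  let ?S = "par_selected n \<pi> E R"
  show "w \<notin> par_round n \<pi> E R"
  proof (cases "v \<in> R")
    case False
    then show ?thesis using assms v e unfolding Inv_def par_round_def by auto
  next
    case True
    then have "v \<in> ?S \<or> (\<exists>s\<in>?S. E s v)" using vn unfolding par_round_def by auto
    then show ?thesis
    proof
      assume "v \<in> ?S" then show ?thesis using e unfolding par_round_def by auto
    next
      assume "\<exists>s\<in>?S. E s v"
      then obtain s where s: "s \<in> ?S" "E s v" by blast
      then obtain i where i: "s = \<pi> i" "i \<in> {1..n}" "\<pi> i \<in> R"
          "\<forall>j\<in>{1..n}. \<pi> j \<in> R \<and> E (\<pi> i) (\<pi> j) \<longrightarrow> i < j"
        unfolding par_selected_def by blast
      have "s \<notin> M" using M_indep s v by blast
      then obtain a where a: "1 \<le> a" "a < i" "\<pi> a \<in> M" "E (\<pi> a) (\<pi> i)"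
        using M_max i by blast
      have "\<pi> a \<notin> R" using i(4) a i(2) esym[OF a(4)] by force
      then have "s \<notin> R" using assms a i unfolding Inv_def by auto
      then show ?thesis using i by simp
    qed
  qed
qed

lemma rem_Suc: "remaining n \<pi> E V (Suc k) = par_round n \<pi> E (remaining n \<pi> E V k)"
  unfolding remaining_def by simp

lemma Inv_rem: "M \<subseteq> V \<Longrightarrow> Inv (remaining n \<pi> E V k)"
proof (induction k)
  case 0 then show ?case unfolding Inv_def remaining_def by auto
next
  case (Suc k) then show ?case using Inv_round rem_Suc by simp
qed

lemma sorted_le_last: "sorted_wrt (<) ps \<Longrightarrow> x \<in> set ps \<Longrightarrow> x \<le> (last ps :: nat)"
proof -
  assume s: "sorted_wrt (<) ps" and x: "x \<in> set ps"
  obtain k where k: "k < length ps" "x = ps ! k" using x by (auto simp: in_set_conv_nth)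
  have "ps \<noteq> []" using k by auto
  then have l: "last ps = ps ! (length ps - 1)" by (simp add: last_conv_nth)
  show ?thesis
  proof (cases "k = length ps - 1")
    case True then show ?thesis using k l by simp
  next
    case False
    then have "k < length ps - 1" using k by simp
    then have "ps ! k < ps ! (length ps - 1)" using k s sorted_wrt_nth_less[of "(<)" ps k "length ps - 1"] by simp
    then show ?thesis using k l by simp
  qed
qed

lemma dep_ext:
  assumes dp: "dep_path n \<pi> E ps" and ne: "ps \<noteq> []" and li: "last ps = i"
    and ij: "i < j" and jp: "j < p" and jn: "j \<in> {1..n}" and pn: "p \<in> {1..n}"
    and e1: "E (\<pi> i) (\<pi> j)" and e2: "E (\<pi> j) (\<pi> p)"
    and jM: "\<pi> j \<notin> M" and pM: "\<pi> p \<in> M" and inh: "inhib n \<pi> E (\<pi> j) = \<pi> i"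
  shows "dep_path n \<pi> E (ps @ [j, p])"
proof -
  let ?L = "length ps"
  let ?q = "ps @ [j, p]"
  have L: "odd ?L" "set ps \<subseteq> {1..n}" "sorted_wrt (<) ps"
    "\<forall>t. Suc t < ?L \<longrightarrow> E (\<pi> (ps ! t)) (\<pi> (ps ! Suc t))"
    "\<forall>t < ?L. even t \<longrightarrow> \<pi> (ps ! t) \<in> M"
    "\<forall>t < ?L. odd t \<longrightarrow> \<pi> (ps ! t) \<notin> M \<and> \<pi> (ps ! (t - 1)) = inhib n \<pi> E (\<pi> (ps ! t))"
    using dp unfolding dep_path_def by auto
  have last: "ps ! (?L - 1) = i" using ne li by (simp add: last_conv_nth)
  have n1: "\<And>t. t < ?L \<Longrightarrow> ?q ! t = ps ! t" by (simp add: nth_append)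
  have n2: "?q ! ?L = j" by simp
  have n3: "?q ! Suc ?L = p" by (simp add: nth_append)
  have len: "length ?q = Suc (Suc ?L)" by simp
  have c1: "odd (length ?q)" using L by simp
  have c2: "set ?q \<subseteq> {1..n}" using L jn pn by auto
  have c3: "sorted_wrt (<) ?q"
    using L(3) sorted_le_last[OF L(3)] li ij jp by (force simp: sorted_wrt_append)
  have c4: "\<forall>t. Suc t < length ?q \<longrightarrow> E (\<pi> (?q ! t)) (\<pi> (?q ! Suc t))"
  proof (intro allI impI)
    fix t assume t: "Suc t < length ?q"
    then consider "Suc t < ?L" | "Suc t = ?L" | "Suc t = Suc ?L" using len by linarith
    then show "E (\<pi> (?q ! t)) (\<pi> (?q ! Suc t))"
    proof cases
      case 1 then show ?thesis using L(4) n1 by simp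
    next
      case 2 then have "t = ?L - 1" by simp
      then show ?thesis using 2 n1[of t] last e1 by simp
    next
      case 3 then show ?thesis using n2 n3 e2 by simp
    qed
  qed
  have c5: "\<forall>t < length ?q. even t \<longrightarrow> \<pi> (?q ! t) \<in> M"
  proof (intro allI impI)
    fix t assume t: "t < length ?q" "even t"
    then consider "t < ?L" | "t = ?L" | "t = Suc ?L" using len by linarith
    then show "\<pi> (?q ! t) \<in> M"
    proof cases
      case 1 then show ?thesis using L(5) n1 t by simp
    next
      case 2 then show ?thesis using t L(1) by simp
    next
      case 3 then show ?thesis using n3 pM by simp
    qed
  qed
  have c6: "\<forall>t < length ?q. odd t \<longrightarrow> \<pi> (?q ! t) \<notin> M \<and> \<pi> (?q ! (t - 1)) = inhib n \<pi> E (\<pi> (?q ! t))"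
  proof (intro allI impI)
    fix t assume t: "t < length ?q" "odd t"
    then consider "t < ?L" | "t = ?L" | "t = Suc ?L" using len by linarith
    then show "\<pi> (?q ! t) \<notin> M \<and> \<pi> (?q ! (t - 1)) = inhib n \<pi> E (\<pi> (?q ! t))"
    proof cases
      case 1 then show ?thesis using L(6) n1[of t] n1[of "t - 1"] t by simp
    next
      case 2 then show ?thesis using n2 n1[of "?L - 1"] last jM inh ne by simp
    next
      case 3 then show ?thesis using t L(1) by simp
    qed
  qed
  show ?thesis unfolding dep_path_def using c1 c2 c3 c4 c5 c6 by blast
qed

lemma dep_single: "i \<in> {1..n} \<Longrightarrow> \<pi> i \<in> M \<Longrightarrow> dep_path n \<pi> E [i]"
  unfolding dep_path_def by auto

lemma blocker:
  assumes p: "p \<in> {1..n}" and pM: "\<pi> p \<in> M" and pR: "\<pi> p \<in> par_round n \<pi> E R"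
  shows "\<exists>i j. i < j \<and> j < p \<and> i \<in> {1..n} \<and> j \<in> {1..n} \<and> \<pi> j \<in> R \<and> \<pi> i \<in> M
     \<and> \<pi> j \<notin> M \<and> E (\<pi> i) (\<pi> j) \<and> E (\<pi> j) (\<pi> p) \<and> inhib n \<pi> E (\<pi> j) = \<pi> i"
proof -
  have inR: "\<pi> p \<in> R" and nS: "\<pi> p \<notin> par_selected n \<pi> E R"
    using pR unfolding par_round_def by auto
  have "\<not> (\<forall>j\<in>{1..n}. \<pi> j \<in> R \<and> E (\<pi> p) (\<pi> j) \<longrightarrow> p < j)"
    using nS inR p unfolding par_selected_def by blast
  then obtain j where j: "j \<in> {1..n}" "\<pi> j \<in> R" "E (\<pi> p) (\<pi> j)" "\<not> p < j" by blast
  have "j \<noteq> p" using j irr by auto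
  then have jp: "j < p" using j by simp
  have jM: "\<pi> j \<notin> M" using M_indep pM j(3) by blast
  obtain i where i: "1 \<le> i" "i < j" "\<pi> i \<in> M" "E (\<pi> i) (\<pi> j)" using M_max[OF j(1) jM] by blast
  let ?P = "\<lambda>i. i \<in> {1..n} \<and> \<pi> i \<in> M \<and> E (\<pi> i) (\<pi> j)"
  define i0 where "i0 = (LEAST i. ?P i)"
  have Pi: "?P i" using i j by auto
  have P0: "?P i0" unfolding i0_def using LeastI[of ?P i, OF Pi] .
  have le: "i0 \<le> i" unfolding i0_def using Least_le[of ?P i, OF Pi] .
  have inh: "inhib n \<pi> E (\<pi> j) = \<pi> i0" unfolding inhib_def i0_def by simp
  show ?thesis
    apply (rule exI[of _ i0], rule exI[of _ j])
    using P0 le i j jp jM inh esym[OF j(3)] by auto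
qed

lemma claim:
  assumes MV: "M \<subseteq> V"
  shows "p \<in> {1..n} \<Longrightarrow> \<pi> p \<in> M \<Longrightarrow>
    (\<forall>ps. dep_path n \<pi> E ps \<and> ps \<noteq> [] \<and> last ps = p \<longrightarrow> length ps \<le> 2 * k + 1) \<Longrightarrow>
    \<pi> p \<notin> remaining n \<pi> E V (Suc k)"
proof (induction k arbitrary: p)
  case 0
  show ?case
  proof
    assume "\<pi> p \<in> remaining n \<pi> E V (Suc 0)"
    then have "\<pi> p \<in> par_round n \<pi> E (remaining n \<pi> E V 0)" by (simp only: rem_Suc)
    from blocker[OF "0.prems"(1,2) this] obtain i j where ij: "i < j \<and> j < p \<and> i \<in> {1..n} \<and> j \<in> {1..n} \<and> \<pi> i \<in> M
     \<and> \<pi> j \<notin> M \<and> E (\<pi> i) (\<pi> j) \<and> E (\<pi> j) (\<pi> p) \<and> inhib n \<pi> E (\<pi> j) = \<pi> i"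
      by blast
    have "dep_path n \<pi> E ([i] @ [j, p])"
      apply (rule dep_ext[OF dep_single[of i]])
      using ij "0.prems" by simp_all
    then show False using "0.prems"(3)[rule_format, of "[i] @ [j, p]"] by simp
  qed
next
  case (Suc k)
  show ?case
  proof
    assume "\<pi> p \<in> remaining n \<pi> E V (Suc (Suc k))"
    then have "\<pi> p \<in> par_round n \<pi> E (remaining n \<pi> E V (Suc k))" by (simp only: rem_Suc)
    from blocker[OF Suc.prems(1,2) this] obtain i j where ij: "i < j \<and> j < p \<and> i \<in> {1..n} \<and> j \<in> {1..n}
     \<and> \<pi> j \<in> remaining n \<pi> E V (Suc k) \<and> \<pi> i \<in> M
     \<and> \<pi> j \<notin> M \<and> E (\<pi> i) (\<pi> j) \<and> E (\<pi> j) (\<pi> p) \<and> inhib n \<pi> E (\<pi> j) = \<pi> i"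
      by blast
    have "\<forall>ps. dep_path n \<pi> E ps \<and> ps \<noteq> [] \<and> last ps = i \<longrightarrow> length ps \<le> 2 * k + 1"
    proof (intro allI impI)
      fix ps assume ps: "dep_path n \<pi> E ps \<and> ps \<noteq> [] \<and> last ps = i"
      have "dep_path n \<pi> E (ps @ [j, p])" 
        apply (rule dep_ext[of ps i j p])
        using ps ij Suc.prems by simp_all
      then have "length (ps @ [j, p]) \<le> 2 * Suc k + 1" using Suc.prems(3)[rule_format, of "ps @ [j,p]"] by simp
      then show "length ps \<le> 2 * k + 1" by simp
    qed
    then have "\<pi> i \<notin> remaining n \<pi> E V (Suc k)" using Suc.IH ij by blast
    then show False using Inv_rem[OF MV, of "Suc k"] ij unfolding Inv_def by blast
  qed
qed

end

theorem lemma2p1: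
  fixes V :: "'a set" and E :: "'a \<Rightarrow> 'a \<Rightarrow> bool" and n l :: nat and \<pi> :: "nat \<Rightarrow> 'a"
  assumes "simple_graph V E"
    and "card V = n"
    and "bij_betw \<pi> {1..n} V"
    and "\<exists>ps. dep_path n \<pi> E ps \<and> length ps = 2 * l + 1"
    and "\<forall>ps. dep_path n \<pi> E ps \<longrightarrow> length ps \<le> 2 * l + 1"
  shows "remaining n \<pi> E V (l + 1) = {}"
proof -
  have inj: "inj_on \<pi> {1..n}" and img: "\<pi> ` {1..n} = V" using assms(3) by (auto simp: bij_betw_def)
  have es: "\<And>u v. E u v \<Longrightarrow> E v u" and ir: "\<And>v. \<not> E v v" using assms(1) by (auto simp: simple_graph_def)
  have MV: "greedy_mis n \<pi> E \<subseteq> V" using M_sub[where n=n and \<pi>=\<pi> and E=E, OF inj es ir] img by simp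
  have ID: "\<And>R. Inv n \<pi> E R = (\<forall>v\<in>greedy_mis n \<pi> E. v \<notin> R \<longrightarrow> (\<forall>w. E v w \<longrightarrow> w \<notin> R))"
    by (rule Inv_def) (fact inj | fact es | fact ir)+
  have sub: "remaining n \<pi> E V k \<subseteq> V" for k
    by (induction k) (auto simp: remaining_def par_round_def)
  have VM: "\<pi> p \<notin> remaining n \<pi> E V (Suc l)" if "p \<in> {1..n}" "\<pi> p \<in> greedy_mis n \<pi> E" for p
    using claim[where n=n and \<pi>=\<pi> and E=E, OF inj es ir MV that] assms(5) by blast
  show ?thesis
  proof (rule ccontr)
    assume "remaining n \<pi> E V (l + 1) \<noteq> {}"
    then obtain x where x: "x \<in> remaining n \<pi> E V (Suc l)" by auto
    then obtain q where q: "q \<in> {1..n}" "x = \<pi> q" using sub img by blast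
    show False
    proof (cases "\<pi> q \<in> greedy_mis n \<pi> E")
      case True then show ?thesis using VM q x by blast
    next
      case False
      then obtain i where i: "1 \<le> i" "i < q" "\<pi> i \<in> greedy_mis n \<pi> E" "E (\<pi> i) (\<pi> q)"
        using M_max[where n=n and \<pi>=\<pi> and E=E, OF inj es ir q(1)] by blast
      have "\<pi> i \<notin> remaining n \<pi> E V (Suc l)" using VM i q by auto
      moreover have "Inv n \<pi> E (remaining n \<pi> E V (Suc l))"
        by (rule Inv_rem) (fact inj | fact es | fact ir | fact MV)+
      ultimately have "\<pi> q \<notin> remaining n \<pi> E V (Suc l)"
        using i(3,4) unfolding ID by blast
      then show False using x q by simp
    qed
  qed
qed

end
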